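(* Let $(X,\mathbf R)$ be a symmetric association scheme with $D$ classes which is cometric with respect to the ordering $E_0,\dots,E_D$. Fix $x\in X$ and write $E_k^*=E_k^*(x)$. Let $\chi\in V$ be a code and set $\delta^*=\delta^*(\chi)$, $s_x=s_x(\chi)$. Then for every $0\le k\le D$, $E_k^*\chi$ is a relative $(\delta^*-s_x)$-design with respect to $x$; that is, $E_jE_k^*\chi\in\mathbb C E_j\hat x$ for all $1\le j\le \delta^*-s_x$.
   Context: $(X,\mathbf R)$ is a symmetric association scheme with associate matrices $A_0=I,\dots,A_D$, Bose–Mesner algebra $M$, and primitive idempotents $E_0=|X|^{-1}J,E_1,\dots,E_D$. Cometric (Q-polynomial) with respect to $E_0,\dots,E_D$ means that for each $j$, $E_j$ is a polynomial of degree exactly $j$ in $E_1$ with respect to entrywise (Hadamard) multiplication. $V=\mathbb C^X$ with standard basis $\{\hat y\}$ and standard Hermitian inner product. $E_k^*(x)$ is the diagonal matrix with $(E_k^*(x))_{yy}=(A_k)_{xy}$. A code is a vector $\chi\notin E_0V$ with $\chi\notin E_0^*(z)V$ for all $z\in X$. $\delta^*(\chi)=\min\{j\ne0:E_j\chi\ne0\}$, $s_x(\chi)=|\{i\ne0:E_i^*(x)\chi\ne0\}|$. A vector $\psi$ is a relative $t$-design with respect to $x$ if $E_j\psi$ and $E_j\hat x$ are linearly dependent for all $1\le j\le t$ (vacuous if $t\le 0$). *)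

theory Defs
  imports "HOL-Analysis.Analysis" "HOL-Computational_Algebra.Polynomial"
begin

definition mscale :: "complex \<Rightarrow> complex^'x^'y \<Rightarrow> complex^'x^'y" where
  "mscale c M = (\<chi> i j. c * M $ i $ j)"

definition Jmat :: "complex^'x^'x" where
  "Jmat = (\<chi> i j. 1)"

definition sym_assoc_scheme :: "nat \<Rightarrow> (nat \<Rightarrow> complex^'x^'x) \<Rightarrow> bool" where
  "sym_assoc_scheme D A \<longleftrightarrow>
     (\<forall>i\<le>D. \<forall>y z. A i $ y $ z = 0 \<or> A i $ y $ z = 1) \<and>
     A 0 = mat 1 \<and>
     (\<Sum>i\<le>D. A i) = Jmat \<and>
     (\<forall>i\<le>D. A i \<noteq> 0) \<and>
     (\<forall>i\<le>D. transpose (A i) = A i) \<and>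
     (\<forall>i\<le>D. \<forall>j\<le>D. \<exists>p. A i ** A j = (\<Sum>h\<le>D. mscale (p h) (A h)))"

definition bose_mesner :: "nat \<Rightarrow> (nat \<Rightarrow> complex^'x^'x) \<Rightarrow> (complex^'x^'x) set" where
  "bose_mesner D A = {M. \<exists>c. M = (\<Sum>h\<le>D. mscale (c h) (A h))}"

text \<open>E 0 = |X|^{-1} J, E 1, ..., E D are the primitive idempotents of M
  (D+1 nonzero pairwise orthogonal idempotents of the (D+1)-dimensional
  algebra M summing to I).\<close>
definition primitive_idempotents ::
  "nat \<Rightarrow> (nat \<Rightarrow> complex^'x^'x) \<Rightarrow> (nat \<Rightarrow> complex^'x^'x) \<Rightarrow> bool" where
  "primitive_idempotents D A E \<longleftrightarrow>
     E 0 = mscale (1 / of_nat CARD('x)) Jmat \<and>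
     (\<forall>i\<le>D. E i \<in> bose_mesner D A \<and> E i \<noteq> 0) \<and>
     (\<forall>i\<le>D. \<forall>j\<le>D. E i ** E j = (if i = j then E i else 0)) \<and>
     (\<Sum>i\<le>D. E i) = mat 1"

definition cometric :: "nat \<Rightarrow> (nat \<Rightarrow> complex^'x^'x) \<Rightarrow> bool" where
  "cometric D E \<longleftrightarrow>
     (\<forall>j\<le>D. \<exists>p :: complex poly. degree p = j \<and>
        (\<forall>y z. E j $ y $ z = poly p (E 1 $ y $ z)))"

definition dual_idem :: "(nat \<Rightarrow> complex^'x^'x) \<Rightarrow> nat \<Rightarrow> 'x \<Rightarrow> complex^'x^'x" where
  "dual_idem A k x = (\<chi> y z. if y = z then A k $ x $ y else 0)"

definition is_code ::
  "(nat \<Rightarrow> complex^'x^'x) \<Rightarrow> (nat \<Rightarrow> complex^'x^'x) \<Rightarrow> complex^'x \<Rightarrow> bool" where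
  "is_code A E v \<longleftrightarrow>
     v \<notin> range (\<lambda>w. E 0 *v w) \<and> (\<forall>z. v \<notin> range (\<lambda>w. dual_idem A 0 z *v w))"

definition dual_min_dist :: "nat \<Rightarrow> (nat \<Rightarrow> complex^'x^'x) \<Rightarrow> complex^'x \<Rightarrow> nat" where
  "dual_min_dist D E v = Min {j \<in> {1..D}. E j *v v \<noteq> 0}"

definition s_x :: "nat \<Rightarrow> (nat \<Rightarrow> complex^'x^'x) \<Rightarrow> 'x \<Rightarrow> complex^'x \<Rightarrow> nat" where
  "s_x D A x v = card {i \<in> {1..D}. dual_idem A i x *v v \<noteq> 0}"

definition lin_dep2 :: "complex^'x \<Rightarrow> complex^'x \<Rightarrow> bool" where
  "lin_dep2 u w \<longleftrightarrow> (\<exists>a b. (a \<noteq> 0 \<or> b \<noteq> 0) \<and> a *s u + b *s w = 0)"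

text \<open>Relative t-design with respect to x (t an integer; vacuous if t \<le> 0).\<close>
definition relative_design ::
  "nat \<Rightarrow> (nat \<Rightarrow> complex^'x^'x) \<Rightarrow> 'x \<Rightarrow> complex^'x \<Rightarrow> int \<Rightarrow> bool" where
  "relative_design D E x psi t \<longleftrightarrow>
     (\<forall>j. 1 \<le> j \<and> j \<le> D \<and> int j \<le> t \<longrightarrow> lin_dep2 (E j *v psi) (E j *v axis x 1))"

end

theory Submission
  imports Defs
begin


lemma mscale_apply[simp]: "mscale c M $ i $ j = c * M $ i $ j"
  by (simp add: mscale_def)

lemma mmult_entry: "(X ** Y) $ i $ j = (\<Sum>k\<in>UNIV. X $ i $ k * Y $ k $ j)"
  by (simp add: matrix_matrix_mult_def)

lemma mvec_entry: "(X *v u) $ i = (\<Sum>k\<in>UNIV. X $ i $ k * u $ k)"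
  by (simp add: matrix_vector_mult_def)

lemma sum_entry2: "(sum f S) $ i $ j = (\<Sum>s\<in>S. f s $ i $ j)"
  by simp

locale cs =
  fixes D :: nat and A E :: "nat \<Rightarrow> complex^'x::finite^'x"
  assumes sas: "sym_assoc_scheme D A"
    and pi: "primitive_idempotents D A E"
    and com: "cometric D E"
begin

lemma A01: "i \<le> D \<Longrightarrow> A i $ a $ b = 0 \<or> A i $ a $ b = 1"
  using sas unfolding sym_assoc_scheme_def by blast

lemma Asum: "(\<Sum>i\<le>D. A i $ a $ b) = 1"
proof -
  have "(\<Sum>i\<le>D. A i) $ a $ b = 1" using sas unfolding sym_assoc_scheme_def Jmat_def by simp
  then show ?thesis by simp
qed

lemma Asym: "i \<le> D \<Longrightarrow> A i $ a $ b = A i $ b $ a"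
proof -
  assume "i \<le> D"
  then have "transpose (A i) = A i" using sas unfolding sym_assoc_scheme_def by blast
  then show ?thesis by (metis transpose_def vec_lambda_beta)
qed

lemma A0: "A 0 = mat 1"
  using sas unfolding sym_assoc_scheme_def by blast

definition fA :: "'x \<Rightarrow> 'x \<Rightarrow> nat \<Rightarrow> nat" where
  "fA a b i = (if A i $ a $ b = 1 then 1 else 0)"

lemma A_fA: "i \<le> D \<Longrightarrow> A i $ a $ b = of_nat (fA a b i)"
  using A01[of i a b] by (auto simp: fA_def)

lemma fA_sum: "(\<Sum>i\<le>D. fA a b i) = 1"
proof -
  have "of_nat (\<Sum>i\<le>D. fA a b i) = (\<Sum>i\<le>D. A i $ a $ b)"
    by (simp add: A_fA)
  also have "\<dots> = 1" by (rule Asum)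
  finally show ?thesis by (metis of_nat_1 of_nat_eq_iff)
qed

lemma A_unique: "i \<le> D \<Longrightarrow> j \<le> D \<Longrightarrow> A i $ a $ b = 1 \<Longrightarrow> A j $ a $ b = 1 \<Longrightarrow> i = j"
proof (rule ccontr)
  assume h: "i \<le> D" "j \<le> D" "A i $ a $ b = 1" "A j $ a $ b = 1" "i \<noteq> j"
  have "(\<Sum>g\<in>{i,j}. fA a b g) \<le> (\<Sum>g\<le>D. fA a b g)"
    by (rule sum_mono2) (use h in auto)
  moreover have "(\<Sum>g\<in>{i,j}. fA a b g) = 2" using h by (simp add: fA_def)
  ultimately show False using fA_sum by simp
qed

lemma A_ex: "\<exists>i\<le>D. A i $ a $ b = 1"
proof (rule ccontr)
  assume "\<not> ?thesis"
  then have "\<forall>i\<le>D. A i $ a $ b = 0" using A01 by blast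
  then have "(\<Sum>i\<le>D. A i $ a $ b) = 0" by simp
  then show False using Asum by simp
qed

definition cls :: "'x \<Rightarrow> 'x \<Rightarrow> nat" where
  "cls a b = (THE i. i \<le> D \<and> A i $ a $ b = 1)"

lemma cls: "cls a b \<le> D" "A (cls a b) $ a $ b = 1"
proof -
  have "\<exists>!i. i \<le> D \<and> A i $ a $ b = 1" using A_ex A_unique by blast
  then have "cls a b \<le> D \<and> A (cls a b) $ a $ b = 1" unfolding cls_def by (rule theI')
  then show "cls a b \<le> D" "A (cls a b) $ a $ b = 1" by auto
qed

lemma cls_eq: "i \<le> D \<Longrightarrow> A i $ a $ b = 1 \<Longrightarrow> cls a b = i"
  using cls A_unique by blast

lemma A_entry: "i \<le> D \<Longrightarrow> A i $ a $ b = (if cls a b = i then 1 else 0)"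
  using cls A01 cls_eq by metis

lemma cls_sym: "cls a b = cls b a"
  using cls Asym cls_eq by metis

lemma cls_diag: "cls a a = 0"
  by (rule cls_eq) (auto simp: A0 mat_def)

lemma cls_0: "cls a b = 0 \<longleftrightarrow> a = b"
proof
  assume "cls a b = 0"
  then have "A 0 $ a $ b = 1" using cls(2)[of a b] by simp
  then show "a = b" by (simp add: A0 mat_def split: if_splits)
next
  assume "a = b"
  then show "cls a b = 0" by (simp add: cls_diag)
qed

lemma combo_entry: "(\<Sum>g\<le>D. mscale (c g) (A g)) $ a $ b = c (cls a b)"
proof -
  have "(\<Sum>g\<le>D. mscale (c g) (A g)) $ a $ b = (\<Sum>g\<le>D. c g * (if cls a b = g then 1 else 0))"
    by (simp add: A_entry)
  also have "\<dots> = c (cls a b)" using cls(1)[of a b] by (simp add: if_distrib cong: if_cong)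
  finally show ?thesis .
qed

definition inM :: "complex^'x^'x \<Rightarrow> bool" where
  "inM X \<longleftrightarrow> (\<exists>c. \<forall>a b. X $ a $ b = c (cls a b))"

lemma bm_inM: "X \<in> bose_mesner D A \<Longrightarrow> inM X"
  unfolding bose_mesner_def inM_def using combo_entry by blast

lemma inM_bm: "inM X \<Longrightarrow> X \<in> bose_mesner D A"
proof -
  assume "inM X"
  then obtain c where c: "\<And>a b. X $ a $ b = c (cls a b)" unfolding inM_def by blast
  have "X = (\<Sum>g\<le>D. mscale (c g) (A g))"
    unfolding vec_eq_iff by (metis c combo_entry)
  then show ?thesis unfolding bose_mesner_def by blast
qed

lemma inM_sym: "inM X \<Longrightarrow> X $ a $ b = X $ b $ a"
  unfolding inM_def using cls_sym by metis

lemma inM_transpose: "inM X \<Longrightarrow> transpose X = X"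
  by (simp add: vec_eq_iff transpose_def inM_sym)

lemma A_inM: "i \<le> D \<Longrightarrow> inM (A i)"
  unfolding inM_def by (rule exI[of _ "\<lambda>g. if g = i then 1 else 0"]) (auto simp: A_entry)

lemma AA_comm: "i \<le> D \<Longrightarrow> j \<le> D \<Longrightarrow> A i ** A j = A j ** A i"
proof -
  assume h: "i \<le> D" "j \<le> D"
  then obtain p where "A i ** A j = (\<Sum>h\<le>D. mscale (p h) (A h))"
    using sas unfolding sym_assoc_scheme_def by blast
  then have "inM (A i ** A j)" using bm_inM unfolding bose_mesner_def by blast
  then have "transpose (A i ** A j) = A i ** A j" by (rule inM_transpose)
  then show ?thesis using h by (simp add: matrix_transpose_mul inM_transpose A_inM)
qed

lemma inM_expand: "inM X \<Longrightarrow> \<exists>c. \<forall>a b. X $ a $ b = (\<Sum>g\<le>D. c g * A g $ a $ b)"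
proof -
  assume "inM X"
  then obtain c where c: "\<And>a b. X $ a $ b = c (cls a b)" unfolding inM_def by blast
  have "X $ a $ b = (\<Sum>g\<le>D. c g * A g $ a $ b)" for a b
  proof -
    have "X $ a $ b = (\<Sum>g\<le>D. mscale (c g) (A g)) $ a $ b" by (metis c combo_entry)
    then show ?thesis by simp
  qed
  then show ?thesis by blast
qed

lemma inM_prod_expand:
  assumes "\<And>a b. P $ a $ b = (\<Sum>g\<le>D. p g * A g $ a $ b)"
    and "\<And>a b. Q $ a $ b = (\<Sum>g\<le>D. q g * A g $ a $ b)"
  shows "(P ** Q) $ a $ b = (\<Sum>g\<le>D. \<Sum>h\<le>D. p g * q h * (A g ** A h) $ a $ b)"
proof -
  have "(P ** Q) $ a $ b = (\<Sum>w\<in>UNIV. (\<Sum>g\<le>D. p g * A g $ a $ w) * (\<Sum>h\<le>D. q h * A h $ w $ b))"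
    unfolding mmult_entry assms by (rule refl)
  also have "\<dots> = (\<Sum>w\<in>UNIV. \<Sum>g\<le>D. \<Sum>h\<le>D. p g * q h * (A g $ a $ w * A h $ w $ b))"
    unfolding sum_product by (intro sum.cong refl) (simp only: mult_ac)
  also have "\<dots> = (\<Sum>g\<le>D. \<Sum>h\<le>D. \<Sum>w\<in>UNIV. p g * q h * (A g $ a $ w * A h $ w $ b))"
    by (subst sum.swap, rule sum.cong[OF refl], rule sum.swap)
  also have "\<dots> = (\<Sum>g\<le>D. \<Sum>h\<le>D. p g * q h * (A g ** A h) $ a $ b)"
    unfolding mmult_entry sum_distrib_left by (rule refl)
  finally show ?thesis .
qed

lemma inM_comm: "inM X \<Longrightarrow> inM Y \<Longrightarrow> X ** Y = Y ** X"
proof -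
  assume X: "inM X" and Y: "inM Y"
  obtain c where c: "\<And>a b. X $ a $ b = (\<Sum>g\<le>D. c g * A g $ a $ b)"
    using inM_expand[OF X] by blast
  obtain d where d: "\<And>a b. Y $ a $ b = (\<Sum>g\<le>D. d g * A g $ a $ b)"
    using inM_expand[OF Y] by blast
  have "(X ** Y) $ a $ b = (Y ** X) $ a $ b" for a b
  proof -
    have "(X ** Y) $ a $ b = (\<Sum>g\<le>D. \<Sum>h\<le>D. c g * d h * (A g ** A h) $ a $ b)"
      by (rule inM_prod_expand[OF c d])
    also have "\<dots> = (\<Sum>h\<le>D. \<Sum>g\<le>D. c g * d h * (A g ** A h) $ a $ b)"
      by (rule sum.swap)
    also have "\<dots> = (\<Sum>h\<le>D. \<Sum>g\<le>D. d h * c g * (A h ** A g) $ a $ b)"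
    proof (intro sum.cong refl)
      fix h g assume "h \<in> {..D}" "g \<in> {..D}"
      then have "A g ** A h = A h ** A g" by (intro AA_comm) auto
      then show "c g * d h * (A g ** A h) $ a $ b = d h * c g * (A h ** A g) $ a $ b"
        by (simp only: mult.commute)
    qed
    also have "\<dots> = (Y ** X) $ a $ b" by (rule inM_prod_expand[OF d c, symmetric])
    finally show ?thesis .
  qed
  then show ?thesis by (simp add: vec_eq_iff)
qed

end



definition cconj :: "complex^'x^'y \<Rightarrow> complex^'x^'y" where
  "cconj M = (\<chi> i j. cnj (M $ i $ j))"

lemma cconj_apply[simp]: "cconj M $ i $ j = cnj (M $ i $ j)"
  by (simp add: cconj_def)

lemma cconj_mult: "cconj (X ** Y) = cconj X ** cconj Y"
  by (simp add: vec_eq_iff mmult_entry)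

lemma cconj_cconj[simp]: "cconj (cconj X) = X"
  by (simp add: vec_eq_iff)

lemma cconj_diff: "cconj (X - Y) = cconj X - cconj Y"
  by (simp add: vec_eq_iff)

lemma transpose_diff: "transpose (X - Y) = transpose X - transpose Y"
  by (simp add: vec_eq_iff transpose_def)

lemma mult_diff_right: "(X::complex^'x^'y) ** (Y - Z) = X ** Y - X ** Z"
  by (simp add: vec_eq_iff mmult_entry right_diff_distrib sum_subtractf)

lemma mult_diff_left: "((X::complex^'x^'y) - Y) ** Z = X ** Z - Y ** Z"
  by (simp add: vec_eq_iff mmult_entry left_diff_distrib sum_subtractf)

lemma herm_zero:
  fixes B :: "complex^'x^'y"
  assumes "transpose (cconj B) ** B = 0"
  shows "B = 0"
proof -
  have "\<forall>a b. B $ b $ a = 0"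
  proof (intro allI)
    fix a b
    have "(transpose (cconj B) ** B) $ a $ a = 0" using assms by simp
    then have "(\<Sum>w\<in>UNIV. cnj (B $ w $ a) * B $ w $ a) = 0"
      by (simp add: mmult_entry transpose_def)
    moreover have "cnj z * z = complex_of_real ((cmod z)\<^sup>2)" for z
      by (metis complex_norm_square mult.commute of_real_power)
    ultimately have "(\<Sum>w\<in>UNIV. complex_of_real ((cmod (B $ w $ a))\<^sup>2)) = 0"
      by simp
    then have "(\<Sum>w\<in>UNIV. (cmod (B $ w $ a))\<^sup>2) = 0"
      by (metis of_real_eq_0_iff of_real_sum)
    then have "\<forall>w\<in>UNIV. (cmod (B $ w $ a))\<^sup>2 = 0"
      by (subst sum_nonneg_eq_0_iff[symmetric]) auto
    then show "B $ b $ a = 0" by simp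
  qed
  then show ?thesis by (simp add: vec_eq_iff)
qed

context cs begin

lemma E_inM: "h \<le> D \<Longrightarrow> inM (E h)"
  using pi bm_inM unfolding primitive_idempotents_def by blast

lemma E_nz: "h \<le> D \<Longrightarrow> E h \<noteq> 0"
  using pi unfolding primitive_idempotents_def by blast

lemma E_orth: "i \<le> D \<Longrightarrow> j \<le> D \<Longrightarrow> E i ** E j = (if i = j then E i else 0)"
  using pi unfolding primitive_idempotents_def by blast

lemma E_idem: "i \<le> D \<Longrightarrow> E i ** E i = E i"
  using E_orth by simp

lemma E_sum: "(\<Sum>i\<le>D. E i) = mat 1"
  using pi unfolding primitive_idempotents_def by blast

lemma E0: "E 0 = mscale (1 / of_nat CARD('x)) Jmat"
  using pi unfolding primitive_idempotents_def by blast

lemma inM_cconj: "inM X \<Longrightarrow> inM (cconj X)"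
proof -
  assume "inM X"
  then obtain c where c: "\<And>a b. X $ a $ b = c (cls a b)" unfolding inM_def by blast
  show ?thesis unfolding inM_def by (rule exI[of _ "\<lambda>i. cnj (c i)"]) (simp add: c)
qed

lemma E_real: "h \<le> D \<Longrightarrow> cconj (E h) = E h"
proof -
  assume h: "h \<le> D"
  define P where "P = E h"
  define F where "F = cconj P"
  have PM: "inM P" using E_inM h P_def by simp
  have FM: "inM F" using inM_cconj PM F_def by simp
  have PP: "P ** P = P" using E_idem h P_def by simp
  have FF: "F ** F = F" unfolding F_def by (simp add: cconj_mult[symmetric] PP)
  have PF: "P ** F = F ** P" using inM_comm PM FM by simp
  have tP: "transpose P = P" using inM_transpose PM by simp
  have tF: "transpose F = F" using inM_transpose FM by simp
  have cFP: "cconj F = P" by (simp add: F_def)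
  define B where "B = P - F ** P"
  have "transpose (cconj B) = F - F ** P"
    unfolding B_def cconj_diff cconj_mult transpose_diff matrix_transpose_mul
    by (simp add: F_def[symmetric] tP tF cFP)
  moreover have "(F - F ** P) ** B = 0"
  proof -
    have e1: "F ** (F ** P) = F ** P" by (simp add: matrix_mul_assoc FF)
    have e2: "(F ** P) ** P = F ** P" by (simp add: matrix_mul_assoc[symmetric] PP)
    have e4: "(F ** P) ** F = F ** P"
    proof -
      have "(F ** P) ** F = F ** (P ** F)" by (simp only: matrix_mul_assoc)
      also have "\<dots> = F ** (F ** P)" by (simp only: PF)
      also have "\<dots> = F ** P" by (rule e1)
      finally show ?thesis .
    qed
    have e3: "(F ** P) ** (F ** P) = F ** P"
    proof -
      have "(F ** P) ** (F ** P) = ((F ** P) ** F) ** P" by (simp only: matrix_mul_assoc)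
      also have "\<dots> = (F ** P) ** P" by (simp only: e4)
      also have "\<dots> = F ** P" by (rule e2)
      finally show ?thesis .
    qed
    show ?thesis unfolding B_def mult_diff_right mult_diff_left e1 e2 e3 by simp
  qed
  ultimately have "B = 0" using herm_zero[of B] by simp
  then have PFP: "P = F ** P" unfolding B_def by simp
  have "F = cconj (F ** P)" using F_def arg_cong[OF PFP, of cconj] by (rule trans)
  also have "\<dots> = P ** F" by (simp add: cconj_mult cFP F_def[symmetric])
  also have "\<dots> = P" using PF PFP[symmetric] by (rule trans)
  finally have "F = P" .
  then show ?thesis unfolding F_def P_def .
qed

lemma E_real_entry: "h \<le> D \<Longrightarrow> cnj (E h $ a $ b) = E h $ a $ b"
proof -
  assume "h \<le> D"
  then have "cconj (E h) $ a $ b = E h $ a $ b" using E_real by simp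
  then show ?thesis by simp
qed

lemma E_sym: "h \<le> D \<Longrightarrow> E h $ a $ b = E h $ b $ a"
  using E_inM inM_sym by blast

end


context cs begin

definition pp :: "nat \<Rightarrow> complex poly" where
  "pp j = (SOME p. degree p = j \<and> (\<forall>y z. E j $ y $ z = poly p (E 1 $ y $ z)))"

lemma pp: assumes "j \<le> D"
  shows "degree (pp j) = j" "E j $ y $ z = poly (pp j) (E 1 $ y $ z)"
proof -
  have "\<exists>p. degree p = j \<and> (\<forall>y z. E j $ y $ z = poly p (E 1 $ y $ z))"
    using com assms unfolding cometric_def by blast
  then have "degree (pp j) = j \<and> (\<forall>y z. E j $ y $ z = poly (pp j) (E 1 $ y $ z))"
    unfolding pp_def by (rule someI_ex)
  then show "degree (pp j) = j" "E j $ y $ z = poly (pp j) (E 1 $ y $ z)" by auto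
qed

lemma inspan:
  "m \<le> D \<Longrightarrow> degree g \<le> m \<Longrightarrow>
   \<exists>c. (\<forall>a b. poly g (E 1 $ a $ b) = (\<Sum>h\<le>D. c h * E h $ a $ b)) \<and> (\<forall>h. m < h \<longrightarrow> c h = 0)"
proof (induction m arbitrary: g)
  case 0
  have dg: "degree (pp 0) = 0" using pp(1)[of 0] by simp
  obtain b where b: "pp 0 = [:b:]" using dg by (metis degree_eq_zeroE)
  have E0e: "E 0 $ y $ z = b" for y z using pp(2)[of 0 y z] b by simp
  have "b \<noteq> 0"
  proof
    assume "b = 0"
    then have "E 0 = 0" using E0e by (simp add: vec_eq_iff)
    then show False using E_nz[of 0] by simp
  qed
  obtain a where a: "g = [:a:]" using 0 by (metis degree_eq_zeroE le_zero_eq)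
  define c where "c = (\<lambda>h::nat. if h = 0 then a / b else 0)"
  have "poly g (E 1 $ y $ z) = (\<Sum>h\<le>D. c h * E h $ y $ z)" for y z
  proof -
    have "(\<Sum>h\<le>D. c h * E h $ y $ z) = c 0 * E 0 $ y $ z"
      by (subst sum.remove[of _ 0]) (auto simp: c_def)
    then show ?thesis using \<open>b \<noteq> 0\<close> by (simp add: a E0e c_def)
  qed
  moreover have "\<forall>h. 0 < h \<longrightarrow> c h = 0" by (simp add: c_def)
  ultimately show ?case by blast
next
  case (Suc n)
  define m where "m = Suc n"
  have mD: "m \<le> D" using Suc m_def by simp
  define p where "p = pp m"
  have dp: "degree p = m" using pp(1)[OF mD] p_def by simp
  have pE: "E m $ y $ z = poly p (E 1 $ y $ z)" for y z using pp(2)[OF mD] p_def by simp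
  have p0: "p \<noteq> 0" using dp m_def by auto
  define r where "r = coeff g m / lead_coeff p"
  define g' where "g' = g - smult r p"
  have "degree g' \<le> n"
  proof (rule degree_le, intro allI impI)
    fix i assume i: "n < i"
    show "coeff g' i = 0"
    proof (cases "i = m")
      case True
      have "coeff p m \<noteq> 0" using p0 dp leading_coeff_neq_0[of p] by simp
      then show ?thesis using True dp by (simp add: g'_def r_def)
    next
      case False
      then have "m < i" using i m_def by simp
      then have "coeff g i = 0" "coeff p i = 0" using Suc.prems dp m_def
        by (auto intro!: coeff_eq_0)
      then show ?thesis by (simp add: g'_def)
    qed
  qed
  then obtain c' where c': "\<And>a b. poly g' (E 1 $ a $ b) = (\<Sum>h\<le>D. c' h * E h $ a $ b)"
    and c'z: "\<And>h. n < h \<Longrightarrow> c' h = 0"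
    using Suc.IH[of g'] Suc.prems by auto
  define c where "c = (\<lambda>h. c' h + (if h = m then r else 0))"
  have "poly g (E 1 $ y $ z) = (\<Sum>h\<le>D. c h * E h $ y $ z)" for y z
  proof -
    have "poly g (E 1 $ y $ z) = poly g' (E 1 $ y $ z) + r * E m $ y $ z"
      by (simp add: g'_def pE)
    also have "\<dots> = (\<Sum>h\<le>D. c' h * E h $ y $ z) + (\<Sum>h\<le>D. (if h = m then r else 0) * E h $ y $ z)"
    proof -
      have "(\<Sum>h\<le>D. (if h = m then r else 0) * E h $ y $ z) = (\<Sum>h\<le>D. if h = m then r * E m $ y $ z else 0)"
        by (rule sum.cong) auto
      also have "\<dots> = r * E m $ y $ z" using mD by simp
      finally show ?thesis by (simp only: c')
    qed
    also have "\<dots> = (\<Sum>h\<le>D. c h * E h $ y $ z)"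
      by (simp add: c_def distrib_right sum.distrib)
    finally show ?thesis .
  qed
  moreover have "\<forall>h. Suc n < h \<longrightarrow> c h = 0" using c'z by (simp add: c_def m_def)
  ultimately show ?case by blast
qed

lemma combE_mult:
  assumes "\<And>a b. X $ a $ b = (\<Sum>g\<le>D. c g * E g $ a $ b)" and "l \<le> D"
  shows "X ** E l = mscale (c l) (E l)"
proof -
  have "(X ** E l) $ a $ b = c l * E l $ a $ b" for a b
  proof -
    have "(X ** E l) $ a $ b = (\<Sum>w\<in>UNIV. (\<Sum>g\<le>D. c g * E g $ a $ w) * E l $ w $ b)"
      unfolding mmult_entry assms(1) by (rule refl)
    also have "\<dots> = (\<Sum>w\<in>UNIV. \<Sum>g\<le>D. c g * (E g $ a $ w * E l $ w $ b))"
      unfolding sum_distrib_right by (simp only: mult.assoc)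
    also have "\<dots> = (\<Sum>g\<le>D. \<Sum>w\<in>UNIV. c g * (E g $ a $ w * E l $ w $ b))"
      by (rule sum.swap)
    also have "\<dots> = (\<Sum>g\<le>D. c g * (E g ** E l) $ a $ b)"
      unfolding mmult_entry sum_distrib_left by (rule refl)
    also have "\<dots> = (\<Sum>g\<le>D. if g = l then c l * E l $ a $ b else 0)"
      by (rule sum.cong[OF refl]) (simp add: E_orth assms(2))
    also have "\<dots> = c l * E l $ a $ b" using assms(2) by simp
    finally show ?thesis .
  qed
  then show ?thesis by (simp add: vec_eq_iff)
qed

lemma hadamard_vanish:
  assumes "h \<le> D" "j \<le> D" "l \<le> D" "h + j < l"
  shows "(\<chi> a b. E h $ a $ b * E j $ a $ b) ** E l = 0"
proof -
  have "degree (pp h * pp j) \<le> h + j"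
    using degree_mult_le[of "pp h" "pp j"] pp(1) assms by simp
  then obtain c where c: "\<And>a b. poly (pp h * pp j) (E 1 $ a $ b) = (\<Sum>g\<le>D. c g * E g $ a $ b)"
    and cz: "\<And>g. h + j < g \<Longrightarrow> c g = 0"
    using inspan[of "h + j" "pp h * pp j"] assms by auto
  have e: "E h $ a $ b * E j $ a $ b = poly (pp h * pp j) (E 1 $ a $ b)" for a b
  proof -
    have "E h $ a $ b = poly (pp h) (E 1 $ a $ b)" by (rule pp(2)[OF assms(1)])
    moreover have "E j $ a $ b = poly (pp j) (E 1 $ a $ b)" by (rule pp(2)[OF assms(2)])
    ultimately show ?thesis by (simp only: poly_mult)
  qed
  have "\<And>a b. (\<chi> a b. E h $ a $ b * E j $ a $ b) $ a $ b = (\<Sum>g\<le>D. c g * E g $ a $ b)"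
    unfolding vec_lambda_beta e c by (rule refl)
  then have "(\<chi> a b. E h $ a $ b * E j $ a $ b) ** E l = mscale (c l) (E l)"
    using combE_mult assms(3) by blast
  then show ?thesis using cz[OF assms(4)] by (simp add: vec_eq_iff)
qed

end


lemma sum0_elem:
  fixes f :: "'a::finite \<Rightarrow> real"
  assumes "sum f UNIV = 0" "\<And>x. 0 \<le> f x"
  shows "f a = 0"
  using assms sum_nonneg_eq_0_iff[of UNIV f] by auto

definition diagm :: "complex^'x^'x \<Rightarrow> 'x \<Rightarrow> complex^'x^'x" where
  "diagm F x = (\<chi> a b. if a = b then F $ x $ a else 0)"

lemma diagm_right: "(K ** diagm F x) $ y $ w = K $ y $ w * F $ x $ w"
proof -
  have "(K ** diagm F x) $ y $ w = (\<Sum>u\<in>UNIV. if u = w then K $ y $ w * F $ x $ w else 0)"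
    unfolding mmult_entry diagm_def by (rule sum.cong) auto
  then show ?thesis by simp
qed

lemma KDL_entry: "(K ** diagm F x ** L) $ y $ z = (\<Sum>w\<in>UNIV. K $ y $ w * F $ x $ w * L $ w $ z)"
  unfolding mmult_entry[of "K ** diagm F x"] diagm_right by (rule refl)

lemma bil_sq:
  fixes H :: "complex^'x^'x"
  assumes sym: "\<And>a b. H $ a $ b = H $ b $ a" and idem: "H ** H = H"
  shows "(\<Sum>x\<in>UNIV. ((H *v u) $ x)^2) = (\<Sum>w\<in>UNIV. u $ w * (H *v u) $ w)"
proof -
  have "(\<Sum>x\<in>UNIV. ((H *v u) $ x)^2) = (\<Sum>x\<in>UNIV. (\<Sum>w\<in>UNIV. H $ x $ w * u $ w) * (H *v u) $ x)"
    unfolding power2_eq_square mvec_entry[of H u] by (rule refl)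
  also have "\<dots> = (\<Sum>x\<in>UNIV. \<Sum>w\<in>UNIV. u $ w * (H $ w $ x * (H *v u) $ x))"
    unfolding sum_distrib_right by (intro sum.cong refl) (simp add: sym[of _ "x" for x] mult_ac)
  also have "\<dots> = (\<Sum>w\<in>UNIV. \<Sum>x\<in>UNIV. u $ w * (H $ w $ x * (H *v u) $ x))"
    by (rule sum.swap)
  also have "\<dots> = (\<Sum>w\<in>UNIV. u $ w * (H *v (H *v u)) $ w)"
    unfolding mvec_entry[of H "H *v u"] sum_distrib_left by (rule refl)
  also have "\<dots> = (\<Sum>w\<in>UNIV. u $ w * (H *v u) $ w)"
    unfolding matrix_vector_mul_assoc idem by (rule refl)
  finally show ?thesis .
qed

lemma sq_sym_idem:
  fixes K :: "complex^'x^'x"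
  assumes sym: "\<And>a b. K $ a $ b = K $ b $ a" and idem: "K ** K = K"
  shows "(\<Sum>y\<in>UNIV. K $ y $ w * K $ y $ w') = K $ w $ w'"
proof -
  have "(\<Sum>y\<in>UNIV. K $ y $ w * K $ y $ w') = (K ** K) $ w $ w'"
    unfolding mmult_entry by (intro sum.cong refl) (simp add: sym[of _ w])
  then show ?thesis using idem by simp
qed

lemma triple:
  fixes K H L :: "complex^'x^'x"
  assumes sK: "\<And>a b. K $ a $ b = K $ b $ a" and iK: "K ** K = K"
    and sH: "\<And>a b. H $ a $ b = H $ b $ a" and iH: "H ** H = H"
    and sL: "\<And>a b. L $ a $ b = L $ b $ a" and iL: "L ** L = L"
  shows "(\<Sum>y\<in>UNIV. \<Sum>z\<in>UNIV. \<Sum>x\<in>UNIV. ((K ** diagm H x ** L) $ y $ z)^2)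
       = (\<Sum>w\<in>UNIV. \<Sum>w'\<in>UNIV. H $ w $ w' * (K $ w $ w' * L $ w $ w'))"
proof -
  define f where "f y z w w' = H $ w $ w' * (K $ y $ w * K $ y $ w') * (L $ w $ z * L $ w' $ z)" for y z w w'
  have step1: "(\<Sum>x\<in>UNIV. ((K ** diagm H x ** L) $ y $ z)^2) = (\<Sum>w\<in>UNIV. \<Sum>w'\<in>UNIV. f y z w w')" for y z
  proof -
    define u where "u = (\<chi> w. K $ y $ w * L $ w $ z)"
    have "(K ** diagm H x ** L) $ y $ z = (H *v u) $ x" for x
      unfolding KDL_entry mvec_entry u_def by (intro sum.cong refl) (simp add: mult_ac)
    then have "(\<Sum>x\<in>UNIV. ((K ** diagm H x ** L) $ y $ z)^2) = (\<Sum>x\<in>UNIV. ((H *v u) $ x)^2)"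
      by simp
    also have "\<dots> = (\<Sum>w\<in>UNIV. u $ w * (H *v u) $ w)" by (rule bil_sq[OF sH iH])
    also have "\<dots> = (\<Sum>w\<in>UNIV. \<Sum>w'\<in>UNIV. f y z w w')"
      unfolding mvec_entry sum_distrib_left u_def f_def
      by (intro sum.cong refl) (simp add: mult_ac)
    finally show ?thesis .
  qed
  have "(\<Sum>y\<in>UNIV. \<Sum>z\<in>UNIV. \<Sum>x\<in>UNIV. ((K ** diagm H x ** L) $ y $ z)^2)
      = (\<Sum>y\<in>UNIV. \<Sum>z\<in>UNIV. \<Sum>w\<in>UNIV. \<Sum>w'\<in>UNIV. f y z w w')"
    by (simp only: step1)
  also have "\<dots> = (\<Sum>y\<in>UNIV. \<Sum>w\<in>UNIV. \<Sum>z\<in>UNIV. \<Sum>w'\<in>UNIV. f y z w w')"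
    by (rule sum.cong[OF refl], rule sum.swap)
  also have "\<dots> = (\<Sum>w\<in>UNIV. \<Sum>y\<in>UNIV. \<Sum>z\<in>UNIV. \<Sum>w'\<in>UNIV. f y z w w')"
    by (rule sum.swap)
  also have "\<dots> = (\<Sum>w\<in>UNIV. \<Sum>y\<in>UNIV. \<Sum>w'\<in>UNIV. \<Sum>z\<in>UNIV. f y z w w')"
    by (rule sum.cong[OF refl], rule sum.cong[OF refl], rule sum.swap)
  also have "\<dots> = (\<Sum>w\<in>UNIV. \<Sum>w'\<in>UNIV. \<Sum>y\<in>UNIV. \<Sum>z\<in>UNIV. f y z w w')"
    by (rule sum.cong[OF refl], rule sum.swap)
  also have "\<dots> = (\<Sum>w\<in>UNIV. \<Sum>w'\<in>UNIV. H $ w $ w' * (\<Sum>y\<in>UNIV. K $ y $ w * K $ y $ w') * (\<Sum>z\<in>UNIV. L $ w $ z * L $ w' $ z))"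
  proof (intro sum.cong refl)
    fix w w'
    have "(\<Sum>y\<in>UNIV. \<Sum>z\<in>UNIV. f y z w w') = (\<Sum>y\<in>UNIV. H $ w $ w' * (K $ y $ w * K $ y $ w')) * (\<Sum>z\<in>UNIV. L $ w $ z * L $ w' $ z)"
      unfolding f_def by (rule sum_product[symmetric])
    also have "\<dots> = H $ w $ w' * (\<Sum>y\<in>UNIV. K $ y $ w * K $ y $ w') * (\<Sum>z\<in>UNIV. L $ w $ z * L $ w' $ z)"
      by (simp only: sum_distrib_left)
    finally show "(\<Sum>y\<in>UNIV. \<Sum>z\<in>UNIV. f y z w w') = H $ w $ w' * (\<Sum>y\<in>UNIV. K $ y $ w * K $ y $ w') * (\<Sum>z\<in>UNIV. L $ w $ z * L $ w' $ z)" .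
  qed
  also have "\<dots> = (\<Sum>w\<in>UNIV. \<Sum>w'\<in>UNIV. H $ w $ w' * K $ w $ w' * L $ w $ w')"
  proof (intro sum.cong refl)
    fix w w'
    have "(\<Sum>z\<in>UNIV. L $ w $ z * L $ w' $ z) = (\<Sum>z\<in>UNIV. L $ z $ w * L $ z $ w')"
      by (intro sum.cong refl) (simp add: sL[of w] sL[of w'])
    then show "H $ w $ w' * (\<Sum>y\<in>UNIV. K $ y $ w * K $ y $ w') * (\<Sum>z\<in>UNIV. L $ w $ z * L $ w' $ z) =
         H $ w $ w' * K $ w $ w' * L $ w $ w'"
      by (simp only: sq_sym_idem[OF sK iK] sq_sym_idem[OF sL iL])
  qed
  finally show ?thesis by (simp only: mult.assoc)
qed

context cs begin

lemma E_props: "h \<le> D \<Longrightarrow> (\<And>a b. E h $ a $ b = E h $ b $ a)" "h \<le> D \<Longrightarrow> E h ** E h = E h"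
  using E_sym E_idem by auto

lemma KDL_real: "h \<le> D \<Longrightarrow> j \<le> D \<Longrightarrow> l \<le> D \<Longrightarrow>
  cnj ((E j ** diagm (E h) x ** E l) $ y $ z) = (E j ** diagm (E h) x ** E l) $ y $ z"
  unfolding KDL_entry by (simp add: E_real_entry)

lemma EDE_zero:
  assumes "h \<le> D" "j \<le> D" "l \<le> D" "h + j < l"
  shows "E j ** diagm (E h) x ** E l = 0"
proof -
  let ?T = "\<lambda>x y z. (E j ** diagm (E h) x ** E l) $ y $ z"
  have "(\<Sum>w\<in>UNIV. \<Sum>w'\<in>UNIV. E h $ w $ w' * (E j $ w $ w' * E l $ w $ w')) = 0"
  proof -
    have "(\<Sum>w\<in>UNIV. \<Sum>w'\<in>UNIV. E h $ w $ w' * (E j $ w $ w' * E l $ w $ w'))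
        = (\<Sum>w\<in>UNIV. ((\<chi> a b. E h $ a $ b * E j $ a $ b) ** E l) $ w $ w)"
      unfolding mmult_entry
      by (intro sum.cong refl) (simp add: E_sym[OF assms(3), of _ "w" for w] mult_ac)
    also have "\<dots> = 0" using hadamard_vanish[OF assms] by simp
    finally show ?thesis .
  qed
  then have S: "(\<Sum>y\<in>UNIV. \<Sum>z\<in>UNIV. \<Sum>x\<in>UNIV. (?T x y z)^2) = 0"
    using triple[OF E_props(1)[OF assms(2)] E_props(2)[OF assms(2)] E_props(1)[OF assms(1)]
        E_props(2)[OF assms(1)] E_props(1)[OF assms(3)] E_props(2)[OF assms(3)]]
    by simp
  have sq: "(?T x y z)^2 = complex_of_real ((cmod (?T x y z))^2)" for x y z
  proof -
    have "(?T x y z)^2 = ?T x y z * cnj (?T x y z)"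
      using KDL_real[OF assms(1-3)] by (simp add: power2_eq_square)
    also have "\<dots> = complex_of_real ((cmod (?T x y z))^2)"
      by (metis complex_norm_square of_real_power)
    finally show ?thesis .
  qed
  have "(\<Sum>y\<in>UNIV. \<Sum>z\<in>UNIV. \<Sum>x\<in>UNIV. complex_of_real ((cmod (?T x y z))^2)) = 0"
    using S by (simp only: sq)
  then have "complex_of_real (\<Sum>y\<in>UNIV. \<Sum>z\<in>UNIV. \<Sum>x\<in>UNIV. (cmod (?T x y z))^2) = 0"
    by (simp only: of_real_sum)
  then have R: "(\<Sum>y\<in>UNIV. \<Sum>z\<in>UNIV. \<Sum>x\<in>UNIV. (cmod (?T x y z))^2) = 0"
    by (simp only: of_real_eq_0_iff)
  have "?T x y z = 0" for x y z
  proof -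
    have "(\<Sum>z\<in>UNIV. \<Sum>x\<in>UNIV. (cmod (?T x y z))^2) = 0"
      by (rule sum0_elem[OF R]) (auto intro!: sum_nonneg)
    then have "(\<Sum>x\<in>UNIV. (cmod (?T x y z))^2) = 0"
      by (rule sum0_elem) (auto intro!: sum_nonneg)
    then have "(cmod (?T x y z))^2 = 0"
      by (rule sum0_elem) auto
    then show ?thesis by simp
  qed
  then show ?thesis by (simp add: vec_eq_iff)
qed

end


lemma vs: "vector_space (mscale :: complex \<Rightarrow> complex^'x^'y \<Rightarrow> _)"
  by unfold_locales (simp_all add: vec_eq_iff algebra_simps)

lemma mscale_mult_left: "mscale c X ** M = mscale c (X ** M)"
  by (simp add: vec_eq_iff mmult_entry sum_distrib_left mult.assoc)

lemma madd_rdistrib: "((X::complex^'x^'y) + Y) ** M = X ** M + Y ** M"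
  by (simp add: vec_eq_iff mmult_entry distrib_right sum.distrib)

lemma mult_sum_left: "(\<Sum>v\<in>S. f v) ** (M::complex^'x^'x) = (\<Sum>v\<in>S. f v ** M)"
proof (cases "finite S")
  case True
  then show ?thesis
    by (induction S rule: finite_induct) (simp_all add: madd_rdistrib)
next
  case False
  then show ?thesis by simp
qed

lemma mscale_add_right: "mscale c (X + Y) = mscale c X + mscale c Y"
  by (simp add: vec_eq_iff algebra_simps)

lemma mscale_zero_iff: "mscale c X = 0 \<Longrightarrow> X \<noteq> 0 \<Longrightarrow> c = 0"
  by (auto simp: vec_eq_iff)

context cs begin

lemma E_inj: "inj_on E {..D}"
proof (rule inj_onI, rule ccontr)
  fix a b assume h: "a \<in> {..D}" "b \<in> {..D}" "E a = E b" "a \<noteq> b"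
  have "E a = E a ** E a" using E_idem h by simp
  also have "\<dots> = E a ** E b" using h by simp
  also have "\<dots> = 0" using E_orth[of a b] h(1,2,4) by simp
  finally show False using E_nz h by simp
qed

lemma distinct_theta:
  assumes i: "i \<le> D" and k: "k \<le> D" and ik: "i \<noteq> k"
    and y: "A i $ x $ y = 1" and z: "A k $ x $ z = 1"
  shows "E 1 $ x $ y \<noteq> E 1 $ x $ z"
proof
  assume eq: "E 1 $ x $ y = E 1 $ x $ z"
  interpret V: vector_space "mscale :: complex \<Rightarrow> complex^'x^'x \<Rightarrow> _" by (rule vs)
  define G where "G = {..D} - {i, k}"
  define T where "T = A ` G \<union> {A i + A k}"
  have clsy: "cls x y = i" using cls_eq i y by simp
  have clsz: "cls x z = k" using cls_eq k z by simp
  have span: "E h \<in> V.span T" if h: "h \<le> D" for h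
  proof -
    obtain c where c: "\<And>a b. E h $ a $ b = c (cls a b)" using E_inM[OF h] unfolding inM_def by blast
    have "E h $ x $ y = E h $ x $ z" using pp(2)[OF h, of x y] pp(2)[OF h, of x z] eq by simp
    then have cik: "c i = c k" using c clsy clsz by simp
    have "E h = (\<Sum>g\<le>D. mscale (c g) (A g))"
      unfolding vec_eq_iff by (metis c combo_entry)
    also have "\<dots> = mscale (c i) (A i) + (mscale (c k) (A k) + (\<Sum>g\<in>G. mscale (c g) (A g)))"
    proof -
      have "(\<Sum>g\<le>D. mscale (c g) (A g)) = mscale (c i) (A i) + (\<Sum>g\<in>{..D} - {i}. mscale (c g) (A g))"
        using i by (subst sum.remove[of _ i]) auto
      moreover have "(\<Sum>g\<in>{..D} - {i}. mscale (c g) (A g)) = mscale (c k) (A k) + (\<Sum>g\<in>{..D} - {i} - {k}. mscale (c g) (A g))"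
        using k ik by (subst sum.remove[of _ k]) auto
      moreover have "{..D} - {i} - {k} = G" unfolding G_def by auto
      ultimately show ?thesis by simp
    qed
    also have "\<dots> = (\<Sum>g\<in>G. mscale (c g) (A g)) + mscale (c i) (A i + A k)"
      by (simp add: mscale_add_right cik algebra_simps)
    finally have E: "E h = (\<Sum>g\<in>G. mscale (c g) (A g)) + mscale (c i) (A i + A k)" .
    show ?thesis unfolding E
    proof (rule V.span_add)
      show "(\<Sum>g\<in>G. mscale (c g) (A g)) \<in> V.span T"
        by (rule V.span_sum, rule V.span_scale, rule V.span_base) (auto simp: T_def)
      show "mscale (c i) (A i + A k) \<in> V.span T"
        by (rule V.span_scale, rule V.span_base) (auto simp: T_def)
    qed
  qed
  have indep: "V.independent (E ` {..D})"
  proof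
    assume "V.dependent (E ` {..D})"
    then obtain u where u: "\<exists>v\<in>E ` {..D}. u v \<noteq> 0" and s: "(\<Sum>v\<in>E ` {..D}. mscale (u v) v) = 0"
      using V.dependent_finite[of "E ` {..D}"] by auto
    then obtain g where g: "g \<le> D" "u (E g) \<noteq> 0" by auto
    have "0 = (\<Sum>v\<in>E ` {..D}. mscale (u v) v) ** E g" using s by simp
    also have "\<dots> = (\<Sum>v\<in>E ` {..D}. mscale (u v) (v ** E g))"
      by (simp add: mult_sum_left mscale_mult_left)
    also have "\<dots> = (\<Sum>v\<in>E ` {..D}. if v = E g then mscale (u (E g)) (E g) else 0)"
    proof (rule sum.cong[OF refl])
      fix v assume "v \<in> E ` {..D}"
      then obtain h where h: "h \<le> D" "v = E h" by auto
      show "mscale (u v) (v ** E g) = (if v = E g then mscale (u (E g)) (E g) else 0)"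
      proof (cases "h = g")
        case True
        then show ?thesis using h E_idem by simp
      next
        case False
        then have "E h \<noteq> E g" using E_inj h g inj_onD by fastforce
        have "v ** E g = 0" using h g E_orth[of h g] False by simp
        then show ?thesis using \<open>E h \<noteq> E g\<close> h(2) by simp
      qed
    qed
    also have "\<dots> = mscale (u (E g)) (E g)" using g by simp
    finally have "mscale (u (E g)) (E g) = 0" by simp
    then show False using g E_nz mscale_zero_iff by blast
  qed
  have "finite (E ` {..D}) \<and> card (E ` {..D}) \<le> card T"
    by (rule V.independent_span_bound) (use span indep in \<open>auto simp: T_def G_def\<close>)
  moreover have "card (E ` {..D}) = D + 1" using E_inj by (simp add: card_image)
  moreover have "card T \<le> D"
  proof -
    have "card T \<le> card (A ` G) + 1" unfolding T_def
      using card_Un_le[of "A ` G" "{A i + A k}"] by simp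
    also have "card (A ` G) \<le> card G" by (rule card_image_le) (simp add: G_def)
    then have "card (A ` G) + 1 \<le> card G + 1" by simp
    also have "card G = D + 1 - 2" unfolding G_def using i k ik
      by (subst card_Diff_subset) auto
    finally show ?thesis using i k ik by linarith
  qed
  ultimately show False by simp
qed

end


lemma mvec_smult: "(X::complex^'x^'y) *v (c *s u) = c *s (X *v u)"
  by (simp add: vec_eq_iff mvec_entry sum_distrib_left mult_ac)

lemma mscale_mvec: "mscale c (X::complex^'x^'y) *v u = c *s (X *v u)"
  by (simp add: vec_eq_iff mvec_entry sum_distrib_left mult_ac)

lemma mvec_sum_right: "(X::complex^'x^'y) *v (\<Sum>l\<in>L. f l) = (\<Sum>l\<in>L. X *v f l)"
  by (induction L rule: infinite_finite_induct) (simp_all add: matrix_vector_right_distrib)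

lemma sum_mvec_left: "(\<Sum>l\<in>L. M l) *v (u::complex^'x) = (\<Sum>l\<in>L. M l *v u)"
  by (induction L rule: infinite_finite_induct) (simp_all add: matrix_vector_mult_add_rdistrib)

lemma dual_idem_mult: "dual_idem A k x *v v = (\<chi> w. A k $ x $ w * v $ w)"
proof -
  have "(dual_idem A k x *v v) $ w = A k $ x $ w * v $ w" for w
  proof -
    have "(dual_idem A k x *v v) $ w = (\<Sum>u\<in>UNIV. if u = w then A k $ x $ w * v $ w else 0)"
      unfolding mvec_entry dual_idem_def by (rule sum.cong) auto
    then show ?thesis by simp
  qed
  then show ?thesis by (simp add: vec_eq_iff)
qed

lemma diagm_mult: "diagm G x *v v = (\<chi> w. G $ x $ w * v $ w)"
proof -
  have "(diagm G x *v v) $ w = G $ x $ w * v $ w" for w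
  proof -
    have "(diagm G x *v v) $ w = (\<Sum>u\<in>UNIV. if u = w then G $ x $ w * v $ w else 0)"
      unfolding mvec_entry diagm_def by (rule sum.cong) auto
    then show ?thesis by simp
  qed
  then show ?thesis by (simp add: vec_eq_iff)
qed

lemma lin_dep2_of: "P = b *s Q \<Longrightarrow> lin_dep2 P Q"
  unfolding lin_dep2_def by (rule exI[of _ 1], rule exI[of _ "-b"]) (simp add: vec_eq_iff)

context cs begin

lemma v_decomp: "v = E 0 *v v + (\<Sum>l\<in>{1..D}. E l *v v)"
proof -
  have "v = mat 1 *v v" by simp
  also have "\<dots> = (\<Sum>l\<le>D. E l) *v v" by (simp only: E_sum)
  also have "\<dots> = (\<Sum>l\<le>D. E l *v v)" by (rule sum_mvec_left)
  also have "\<dots> = E 0 *v v + (\<Sum>l\<in>{1..D}. E l *v v)"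
  proof -
    have "{..D} = insert 0 {1..D}" by auto
    then show ?thesis by simp
  qed
  finally show ?thesis .
qed

lemma main_case:
  assumes k: "1 \<le> k" "k \<le> D" and y0: "A k $ x $ y0 = 1" "v $ y0 \<noteq> 0"
    and j: "1 \<le> j" "j \<le> D" "j + s_x D A x v \<le> dual_min_dist D E v"
  shows "\<exists>\<beta>. E j *v (dual_idem A k x *v v) = \<beta> *s (E j *v axis x 1)"
proof -
  define S where "S = {i \<in> {1..D}. dual_idem A i x *v v \<noteq> 0}"
  define s where "s = card S"
  define \<delta> where "\<delta> = dual_min_dist D E v"
  have s_def': "s_x D A x v = s" unfolding s_def S_def s_x_def ..
  have finS: "finite S" unfolding S_def by simp
  have kS: "k \<in> S"
  proof -
    have "(dual_idem A k x *v v) $ y0 \<noteq> 0" using y0 by (simp add: dual_idem_mult)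
    then have "dual_idem A k x *v v \<noteq> 0" by auto
    then show ?thesis unfolding S_def using k by auto
  qed
  have s1: "1 \<le> s" unfolding s_def using kS finS
    by (metis One_nat_def Suc_leI card_gt_0_iff empty_iff)
  have sD: "s \<le> D"
  proof -
    have "s \<le> card {1..D}" unfolding s_def S_def by (rule card_mono) auto
    then show ?thesis by simp
  qed
  have jsd: "j + s \<le> \<delta>" using j s_def' \<delta>_def by simp
  have D1: "1 \<le> D" using j by simp
  obtain c1 where c1: "\<And>a b. E 1 $ a $ b = c1 (cls a b)"
    using E_inM[OF D1] unfolding inM_def by blast
  define W where "W = {w. w \<noteq> x \<and> v $ w \<noteq> 0 \<and> A k $ x $ w \<noteq> 1}"
  define \<Theta> where "\<Theta> = (\<lambda>w. E 1 $ x $ w) ` W"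
  define \<theta> where "\<theta> = E 1 $ x $ y0"
  have Wcls: "cls x w \<in> S - {k}" if "w \<in> W" for w
  proof -
    have w: "w \<noteq> x" "v $ w \<noteq> 0" "A k $ x $ w \<noteq> 1" using that W_def by auto
    have "cls x w \<noteq> 0" using w(1) cls_0[of x w] by auto
    moreover have "cls x w \<noteq> k" using w(3) cls(2)[of x w] by auto
    moreover have "dual_idem A (cls x w) x *v v \<noteq> 0"
    proof -
      have "(dual_idem A (cls x w) x *v v) $ w \<noteq> 0" using w(2) cls(2)[of x w] by (simp add: dual_idem_mult)
      then show ?thesis by auto
    qed
    ultimately show ?thesis unfolding S_def using cls(1)[of x w] by auto
  qed
  have ThSub: "\<Theta> \<subseteq> c1 ` (S - {k})"
    unfolding \<Theta>_def using Wcls c1 by auto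
  have finTh: "finite \<Theta>" unfolding \<Theta>_def by simp
  have cardTh: "card \<Theta> \<le> s - 1"
  proof -
    have "card \<Theta> \<le> card (c1 ` (S - {k}))" using ThSub finS by (intro card_mono) auto
    also have "\<dots> \<le> card (S - {k})" by (rule card_image_le) (use finS in auto)
    also have "\<dots> = s - 1" using kS finS s_def by simp
    finally show ?thesis .
  qed
  have thTh: "\<theta> \<notin> \<Theta>"
  proof
    assume "\<theta> \<in> \<Theta>"
    then obtain w where w: "w \<in> W" "E 1 $ x $ w = \<theta>" unfolding \<Theta>_def by auto
    have "cls x w \<noteq> k" "cls x w \<le> D" using Wcls[OF w(1)] S_def by auto
    then have "E 1 $ x $ w \<noteq> E 1 $ x $ y0"
      using distinct_theta[of "cls x w" k x w y0] k y0 cls(2)[of x w] by auto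
    then show False using w(2) \<theta>_def by simp
  qed
  define Q where "Q = (\<Prod>t\<in>\<Theta>. [:- t, 1:])"
  define g where "g = smult (1 / poly Q \<theta>) Q"
  have Qth: "poly Q \<theta> \<noteq> 0" unfolding Q_def poly_prod using thTh finTh by auto
  have g1: "poly g \<theta> = 1" using Qth by (simp add: g_def)
  have g0: "poly g t = 0" if "t \<in> \<Theta>" for t
  proof -
    have "poly Q t = 0" unfolding Q_def poly_prod using that finTh by (auto intro!: prod_zero)
    then show ?thesis by (simp add: g_def)
  qed
  have degg: "degree g \<le> s - 1"
  proof -
    have "degree Q \<le> sum (degree \<circ> (\<lambda>t. [:- t, 1:])) \<Theta>" unfolding Q_def by (rule degree_prod_sum_le[OF finTh])
    also have "\<dots> = card \<Theta>" by simp
    finally have "degree Q \<le> s - 1" using cardTh by simp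
    then show ?thesis by (simp add: g_def)
  qed
  obtain c where c: "\<And>a b. poly g (E 1 $ a $ b) = (\<Sum>h\<le>D. c h * E h $ a $ b)"
    and cz: "\<And>h. s - 1 < h \<Longrightarrow> c h = 0"
  proof -
    have "s - 1 \<le> D" using sD by simp
    from inspan[OF this degg] show ?thesis using that by blast
  qed
  define G where "G = (\<chi> a b. poly g (E 1 $ a $ b))"
  define \<gamma> where "\<gamma> = poly g (E 1 $ x $ x) * v $ x"
  have psi: "dual_idem A k x *v v = diagm G x *v v - \<gamma> *s axis x 1"
  proof -
    have "(dual_idem A k x *v v) $ w = (diagm G x *v v - \<gamma> *s axis x 1) $ w" for w
    proof (cases "w = x")
      case True
      have "A k $ x $ x = 0" using A_entry[OF k(2), of x x] cls_diag k(1) by simp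
      then show ?thesis using True by (simp add: dual_idem_mult diagm_mult G_def \<gamma>_def axis_def)
    next
      case False
      have ax: "axis x 1 $ w = 0" using False by (simp add: axis_def)
      consider "v $ w = 0" | "v $ w \<noteq> 0" "A k $ x $ w = 1" | "v $ w \<noteq> 0" "A k $ x $ w \<noteq> 1" by blast
      then show ?thesis
      proof cases
        case 1 then show ?thesis using False by (simp add: dual_idem_mult diagm_mult axis_def)
      next
        case 2
        have "cls x w = k" "cls x y0 = k" using cls_eq k 2 y0 by auto
        then have "E 1 $ x $ w = \<theta>" using c1[of x w] c1[of x y0] \<theta>_def by simp
        then show ?thesis using 2 False g1 by (simp add: dual_idem_mult diagm_mult G_def axis_def)
      next
        case 3
        then have "w \<in> W" using False W_def by auto
        then have "E 1 $ x $ w \<in> \<Theta>" unfolding \<Theta>_def by auto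
        then have "poly g (E 1 $ x $ w) = 0" by (rule g0)
        moreover have "A k $ x $ w = 0" using A01[OF k(2)] 3 by blast
        ultimately show ?thesis using False by (simp add: dual_idem_mult diagm_mult G_def axis_def)
      qed
    qed
    then show ?thesis by (simp add: vec_eq_iff)
  qed
  have Gent: "G $ a $ b = (\<Sum>h\<le>D. c h * E h $ a $ b)" for a b using c G_def by simp
  have zero_l: "(E j ** diagm G x) *v (E l *v v) = 0" if l: "1 \<le> l" "l \<le> D" for l
  proof (cases "l < \<delta>")
    case True
    have "E l *v v = 0"
    proof (rule ccontr)
      assume "E l *v v \<noteq> 0"
      then have "l \<in> {j \<in> {1..D}. E j *v v \<noteq> 0}" using l by auto
      then have "\<delta> \<le> l" unfolding \<delta>_def dual_min_dist_def by (intro Min_le) auto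
      then show False using True by simp
    qed
    then show ?thesis by simp
  next
    case False
    have "E j ** diagm G x ** E l = 0"
    proof -
      have "(E j ** diagm G x ** E l) $ y $ z = 0" for y z
      proof -
        have "(E j ** diagm G x ** E l) $ y $ z = (\<Sum>w\<in>UNIV. E j $ y $ w * (\<Sum>h\<le>D. c h * E h $ x $ w) * E l $ w $ z)"
          unfolding KDL_entry Gent by (rule refl)
        also have "\<dots> = (\<Sum>w\<in>UNIV. \<Sum>h\<le>D. c h * (E j $ y $ w * E h $ x $ w * E l $ w $ z))"
          by (intro sum.cong refl) (simp add: sum_distrib_left sum_distrib_right mult_ac)
        also have "\<dots> = (\<Sum>h\<le>D. \<Sum>w\<in>UNIV. c h * (E j $ y $ w * E h $ x $ w * E l $ w $ z))"
          by (rule sum.swap)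
        also have "\<dots> = (\<Sum>h\<le>D. c h * (E j ** diagm (E h) x ** E l) $ y $ z)"
          unfolding KDL_entry sum_distrib_left by (rule refl)
        also have "\<dots> = 0"
        proof (rule sum.neutral, rule ballI)
          fix h assume h: "h \<in> {..D}"
          show "c h * (E j ** diagm (E h) x ** E l) $ y $ z = 0"
          proof (cases "h \<le> s - 1")
            case True
            then have "h + j < l" using jsd False s1 by linarith
            then show ?thesis using EDE_zero[of h j l x] h j l by simp
          next
            case False then show ?thesis using cz by simp
          qed
        qed
        finally show ?thesis .
      qed
      then show ?thesis by (simp add: vec_eq_iff)
    qed
    then show ?thesis by (simp add: matrix_vector_mul_assoc)
  qed
  define one :: "complex^'x" where "one = (\<chi> w. 1)"
  define \<sigma> where "\<sigma> = (\<Sum>w\<in>UNIV. v $ w) / of_nat CARD('x)"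
  have E0v: "E 0 *v v = \<sigma> *s one"
    by (simp add: vec_eq_iff E0 mvec_entry Jmat_def one_def \<sigma>_def sum_divide_distrib)
  have Gsym: "G $ a $ b = G $ b $ a" for a b
    unfolding G_def using E_sym[OF D1, of a b] by simp
  have GE: "G ** E j = mscale (c j) (E j)" using combE_mult[of G c j] Gent j by simp
  have tEj: "transpose (E j) = E j" using inM_transpose[OF E_inM[of j]] j by simp
  have tG: "transpose G = G" using Gsym by (simp add: vec_eq_iff transpose_def)
  have EG: "E j ** G = mscale (c j) (E j)"
  proof -
    have "E j ** G = transpose (G ** E j)" by (simp add: matrix_transpose_mul tEj tG)
    also have "\<dots> = transpose (mscale (c j) (E j))" by (simp only: GE)
    also have "\<dots> = mscale (c j) (transpose (E j))" by (simp add: vec_eq_iff transpose_def)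
    finally show ?thesis by (simp only: tEj)
  qed
  have one_term: "(E j ** diagm G x) *v one = (E j ** G) *v axis x 1"
  proof -
    have "((E j ** diagm G x) *v one) $ y = ((E j ** G) *v axis x 1) $ y" for y
    proof -
      have "((E j ** diagm G x) *v one) $ y = (\<Sum>w\<in>UNIV. E j $ y $ w * G $ x $ w)"
        unfolding mvec_entry diagm_right one_def by simp
      also have "\<dots> = (E j ** G) $ y $ x" unfolding mmult_entry
        by (intro sum.cong refl) (simp add: Gsym[of x])
      also have "\<dots> = ((E j ** G) *v axis x 1) $ y"
      proof -
        have "((E j ** G) *v axis x 1) $ y = (\<Sum>w\<in>UNIV. if w = x then (E j ** G) $ y $ x else 0)"
          unfolding mvec_entry axis_def by (intro sum.cong refl) auto
        then show ?thesis by simp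
      qed
      finally show ?thesis .
    qed
    then show ?thesis by (simp add: vec_eq_iff)
  qed
  have term0: "(E j ** diagm G x) *v (E 0 *v v) = (\<sigma> * c j) *s (E j *v axis x 1)"
    unfolding E0v mvec_smult one_term EG mscale_mvec by (simp add: vector_smult_assoc)
  have "E j *v (diagm G x *v v) = (E j ** diagm G x) *v v" by (simp add: matrix_vector_mul_assoc)
  also have "\<dots> = (E j ** diagm G x) *v (E 0 *v v + (\<Sum>l\<in>{1..D}. E l *v v))"
    by (rule arg_cong[where f="\<lambda>u. (E j ** diagm G x) *v u"], rule v_decomp)
  also have "\<dots> = (E j ** diagm G x) *v (E 0 *v v) + (\<Sum>l\<in>{1..D}. (E j ** diagm G x) *v (E l *v v))"
    by (simp only: matrix_vector_right_distrib mvec_sum_right)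
  also have "\<dots> = (\<sigma> * c j) *s (E j *v axis x 1)"
    using zero_l term0 by simp
  finally have main: "E j *v (diagm G x *v v) = (\<sigma> * c j) *s (E j *v axis x 1)" .
  have "E j *v (dual_idem A k x *v v) = (\<sigma> * c j - \<gamma>) *s (E j *v axis x 1)"
    unfolding psi matrix_vector_mult_diff_distrib main mvec_smult
    by (simp add: vec_eq_iff algebra_simps)
  then show ?thesis by blast
qed

end

theorem theorem4p3:
  fixes D :: nat and A E :: "nat \<Rightarrow> complex^'x::finite^'x"
    and x :: 'x and v :: "complex^'x" and k :: nat
  assumes "sym_assoc_scheme D A"
    and "primitive_idempotents D A E"
    and "cometric D E"
    and "is_code A E v"
    and "k \<le> D"
  shows "relative_design D E x (dual_idem A k x *v v)
           (int (dual_min_dist D E v) - int (s_x D A x v))"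
proof -
  interpret cs D A E using assms(1-3) by unfold_locales
  show ?thesis unfolding relative_design_def
  proof (intro allI impI)
    fix j assume j: "1 \<le> j \<and> j \<le> D \<and> int j \<le> int (dual_min_dist D E v) - int (s_x D A x v)"
    show "lin_dep2 (E j *v (dual_idem A k x *v v)) (E j *v axis x 1)"
    proof (cases "k = 0")
      case True
      have "dual_idem A k x *v v = v $ x *s axis x 1"
        using True by (simp add: dual_idem_mult A0 vec_eq_iff mat_def axis_def)
      then show ?thesis by (intro lin_dep2_of[where b="v $ x"]) (simp add: mvec_smult)
    next
      case False
      show ?thesis
      proof (cases "dual_idem A k x *v v = 0")
        case True
        then show ?thesis by (intro lin_dep2_of[where b=0]) simp
      next
        case nz: False
        then obtain y0 where "(dual_idem A k x *v v) $ y0 \<noteq> 0" by (auto simp: vec_eq_iff)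
        then have y0: "A k $ x $ y0 \<noteq> 0" "v $ y0 \<noteq> 0" by (auto simp: dual_idem_mult)
        then have y1: "A k $ x $ y0 = 1" using A01[OF assms(5)] by blast
        have jj: "1 \<le> j" "j \<le> D" "j + s_x D A x v \<le> dual_min_dist D E v" using j by auto
        obtain \<beta> where "E j *v (dual_idem A k x *v v) = \<beta> *s (E j *v axis x 1)"
          using main_case[OF _ assms(5) y1 y0(2) jj] False by auto
        then show ?thesis by (rule lin_dep2_of)
      qed
    qed
  qed
qed


end
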